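(* Let $G$ be a connected signed digraph that is not a signed cycle. Then there exists a degree-bounded finite dynamical system $f:X\to X$ on $G$ and $\xi\in X$ such that $f^{\lambda(G)+\beta(G)}(x)=\xi$ for all $x\in X$, and such that $\xi_i=\min(X_i)$ for every source $i$ of $G$.
   Context: A finite dynamical system (FDS) with $n$ components is a map $f=(f_1,\dots,f_n):X\to X$ where $X=X_1\times\cdots\times X_n$ and each $X_i$ is a nonempty finite interval of integers; $f^k$ is the $k$-fold composition. A signed digraph is a pair $G=(V,E)$ with $E\subseteq V\times V\times\{+,-\}$; $(j,i,s)\in E$ is an arc from $j$ to $i$ of sign $s$ (loops allowed; $G$ may have both a positive and a negative arc from $j$ to $i$, called parallel arcs). Write $G^+_i=\{j:(j,i,+)\in E\}$, $G^-_i=\{j:(j,i,-)\in E\}$, $G_i=G^+_i\cup G^-_i$. In-degree $d^{\mathrm{in}}_G(i)=|G^+_i|+|G^-_i|$; out-degree $d^{\mathrm{out}}_G(i)$ is the number of positive arcs leaving $i$ plus the number of negative arcs leaving $i$. A source is a vertex of in-degree $0$. $G$ is connected if its underlying undirected graph is connected. The underlying unsigned digraph $|G|$ has vertex set $V$ and an arc from $j$ to $i$ iff $j\in G_i$. $G$ is a signed cycle if $|G|$ is a directed cycle (through all vertices, each exactly once; a single vertex with a loop counts) and $G$ has no parallel arcs. A strong component of $G$ is a maximal $U\subseteq V$ such that the induced subgraph $G[U]$ is strongly connected; it is initial if $G$ has no arc from $V\setminus U$ to $U$, and trivial if $G[U]$ has one vertex and no arc. $G$ is basic if all its initial strong components are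 trivial; $\beta(G)=0$ if $G$ is basic and $\beta(G)=1$ otherwise. $d_G(j,i)$ is the minimum number of arcs of a directed path from $j$ to $i$ ($0$ if $j=i$, $\infty$ if no path), and $d_G(U,i)=\min_{j\in U}d_G(j,i)$. With $\mathcal I$ the set of initial strong components, $\lambda(G)=\max_{i\in V}\min_{U\in\mathcal I}\big(d_G(U,i)+|U|\big)$. The interaction graph of an FDS $f$ is the signed digraph on $\{1,\dots,n\}$ with a positive (resp. negative) arc from $j$ to $i$ iff there is $x\in X$ with $x_j<\max(X_j)$ such that $f_i(x+e_j)-f_i(x)$ is positive (resp. negative), $e_j$ the $j$-th unit vector. $f$ is an FDS on $G$ if $G$ is its interaction graph. $f$ is degree-bounded if, with $G$ its interaction graph, for every $i$: $|X_i|=2$ if $d^{\mathrm{out}}_G(i)=0<d^{\mathrm{in}}_G(i)$, and $|X_i|\le d^{\mathrm{out}}_G(i)+1$ otherwise. *)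

theory Defs
  imports Main "HOL-Library.Extended_Nat"
begin

text \<open>A signed digraph on vertex set {0..<n} is a set E of triples (j, i, s):
  an arc from j to i with sign s, where s = True means positive and s = False negative.\<close>

definition arcs :: "(nat \<times> nat \<times> bool) set \<Rightarrow> (nat \<times> nat) set" where
  "arcs E = {(j, i). \<exists>s. (j, i, s) \<in> E}"

definition in_degree :: "(nat \<times> nat \<times> bool) set \<Rightarrow> nat \<Rightarrow> nat" where
  "in_degree E i = card {(j, s). (j, i, s) \<in> E}"

definition out_degree :: "(nat \<times> nat \<times> bool) set \<Rightarrow> nat \<Rightarrow> nat" where
  "out_degree E i = card {(k, s). (i, k, s) \<in> E}"

definition sd_connected :: "nat \<Rightarrow> (nat \<times> nat \<times> bool) set \<Rightarrow> bool" where
  "sd_connected n E \<longleftrightarrow> (\<forall>u<n. \<forall>v<n. (u, v) \<in> (arcs E \<union> (arcs E)\<inverse>)\<^sup>*)"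

definition is_signed_cycle :: "nat \<Rightarrow> (nat \<times> nat \<times> bool) set \<Rightarrow> bool" where
  "is_signed_cycle n E \<longleftrightarrow>
     (\<exists>vs. length vs = n \<and> distinct vs \<and> set vs = {0..<n} \<and>
        arcs E = {(vs ! k, vs ! ((k + 1) mod n)) | k. k < n}) \<and>
     \<not> (\<exists>j i. (j, i, True) \<in> E \<and> (j, i, False) \<in> E)"

definition strongly_connected_in :: "(nat \<times> nat) set \<Rightarrow> nat set \<Rightarrow> bool" where
  "strongly_connected_in A U \<longleftrightarrow> (\<forall>u\<in>U. \<forall>v\<in>U. (u, v) \<in> (A \<inter> U \<times> U)\<^sup>*)"

definition strong_component :: "nat \<Rightarrow> (nat \<times> nat \<times> bool) set \<Rightarrow> nat set \<Rightarrow> bool" where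
  "strong_component n E U \<longleftrightarrow> U \<subseteq> {0..<n} \<and> U \<noteq> {} \<and> strongly_connected_in (arcs E) U \<and>
     (\<forall>U'. U \<subseteq> U' \<and> U' \<subseteq> {0..<n} \<and> strongly_connected_in (arcs E) U' \<longrightarrow> U' = U)"

definition initial_sc :: "nat \<Rightarrow> (nat \<times> nat \<times> bool) set \<Rightarrow> nat set \<Rightarrow> bool" where
  "initial_sc n E U \<longleftrightarrow> strong_component n E U \<and>
     \<not> (\<exists>j i. (j, i) \<in> arcs E \<and> j \<notin> U \<and> i \<in> U)"

definition trivial_sc :: "(nat \<times> nat \<times> bool) set \<Rightarrow> nat set \<Rightarrow> bool" where
  "trivial_sc E U \<longleftrightarrow> card U = 1 \<and> arcs E \<inter> U \<times> U = {}"

definition basic :: "nat \<Rightarrow> (nat \<times> nat \<times> bool) set \<Rightarrow> bool" where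
  "basic n E \<longleftrightarrow> (\<forall>U. initial_sc n E U \<longrightarrow> trivial_sc E U)"

definition beta :: "nat \<Rightarrow> (nat \<times> nat \<times> bool) set \<Rightarrow> nat" where
  "beta n E = (if basic n E then 0 else 1)"

definition sd_dist :: "(nat \<times> nat \<times> bool) set \<Rightarrow> nat \<Rightarrow> nat \<Rightarrow> enat" where
  "sd_dist E j i = (if (j, i) \<in> (arcs E)\<^sup>* then enat (LEAST k. (j, i) \<in> arcs E ^^ k) else \<infinity>)"

definition sd_dist_set :: "(nat \<times> nat \<times> bool) set \<Rightarrow> nat set \<Rightarrow> nat \<Rightarrow> enat" where
  "sd_dist_set E U i = Min ((\<lambda>j. sd_dist E j i) ` U)"

definition lambda_G :: "nat \<Rightarrow> (nat \<times> nat \<times> bool) set \<Rightarrow> enat" where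
  "lambda_G n E = Max ((\<lambda>i. Min ((\<lambda>U. sd_dist_set E U i + enat (card U)) ` {U. initial_sc n E U}))
                        ` {0..<n})"

text \<open>X = X_0 \<times> ... \<times> X_(n-1) with X_i = {lo i .. hi i}; states are functions nat \<Rightarrow> int
  that are 0 outside {0..<n}.\<close>

definition state_space :: "nat \<Rightarrow> (nat \<Rightarrow> int) \<Rightarrow> (nat \<Rightarrow> int) \<Rightarrow> (nat \<Rightarrow> int) set" where
  "state_space n lo hi = {x. (\<forall>i<n. lo i \<le> x i \<and> x i \<le> hi i) \<and> (\<forall>i. n \<le> i \<longrightarrow> x i = 0)}"

definition is_FDS :: "nat \<Rightarrow> (nat \<Rightarrow> int) \<Rightarrow> (nat \<Rightarrow> int) \<Rightarrow> ((nat \<Rightarrow> int) \<Rightarrow> (nat \<Rightarrow> int)) \<Rightarrow> bool" where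
  "is_FDS n lo hi f \<longleftrightarrow> (\<forall>i<n. lo i \<le> hi i) \<and> (\<forall>x\<in>state_space n lo hi. f x \<in> state_space n lo hi)"

definition interaction_graph ::
  "nat \<Rightarrow> (nat \<Rightarrow> int) \<Rightarrow> (nat \<Rightarrow> int) \<Rightarrow> ((nat \<Rightarrow> int) \<Rightarrow> (nat \<Rightarrow> int)) \<Rightarrow> (nat \<times> nat \<times> bool) set" where
  "interaction_graph n lo hi f = {(j, i, s). j < n \<and> i < n \<and>
     (\<exists>x\<in>state_space n lo hi. x j < hi j \<and>
        (if s then f (x(j := x j + 1)) i - f x i > 0 else f (x(j := x j + 1)) i - f x i < 0))}"

definition degree_bounded ::
  "nat \<Rightarrow> (nat \<Rightarrow> int) \<Rightarrow> (nat \<Rightarrow> int) \<Rightarrow> ((nat \<Rightarrow> int) \<Rightarrow> (nat \<Rightarrow> int)) \<Rightarrow> bool" where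
  "degree_bounded n lo hi f \<longleftrightarrow>
     (let G = interaction_graph n lo hi f in
      \<forall>i<n. (if out_degree G i = 0 \<and> 0 < in_degree G i
             then hi i - lo i + 1 = 2
             else hi i - lo i + 1 \<le> int (out_degree G i) + 1))"

end

theory Submission
  imports Defs
begin



locale sdg =
  fixes n :: nat and E :: "(nat \<times> nat \<times> bool) set"
  assumes Esub: "E \<subseteq> {0..<n} \<times> {0..<n} \<times> UNIV"
begin

abbreviation A where "A \<equiv> arcs E"

lemma arcs_iff: "(j, i) \<in> A \<longleftrightarrow> (\<exists>s. (j, i, s) \<in> E)"
  by (simp add: arcs_def)

lemma arcs_lt: "(j, i) \<in> A \<Longrightarrow> j < n \<and> i < n"
  using Esub by (auto simp: arcs_def)

lemma finE: "finite E"
proof -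
  have "finite ({0..<n} \<times> {0..<n} \<times> (UNIV::bool set))" by (intro finite_cartesian_product) auto
  then show ?thesis using Esub finite_subset by blast
qed

lemma fin_out: "finite {(k, s). (i, k, s) \<in> E}"
proof -
  have "{(k, s). (i, k, s) \<in> E} \<subseteq> {0..<n} \<times> (UNIV::bool set)" using Esub by auto
  then show ?thesis by (rule finite_subset) (intro finite_cartesian_product, auto)
qed

lemma fin_in: "finite {(j, s). (j, i, s) \<in> E}"
proof -
  have "{(j, s). (j, i, s) \<in> E} \<subseteq> {0..<n} \<times> (UNIV::bool set)" using Esub by auto
  then show ?thesis by (rule finite_subset) (intro finite_cartesian_product, auto)
qed

lemma in0_iff: "in_degree E i = 0 \<longleftrightarrow> (\<forall>j. (j, i) \<notin> A)"
  using fin_in[of i] by (auto simp: in_degree_def arcs_def)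

lemma out0_iff: "out_degree E i = 0 \<longleftrightarrow> (\<forall>k. (i, k) \<notin> A)"
  using fin_out[of i] by (auto simp: out_degree_def arcs_def)

lemma out_ge2: "(i, k, True) \<in> E \<Longrightarrow> (i, k, False) \<in> E \<Longrightarrow> out_degree E i \<ge> 2"
proof -
  assume a: "(i, k, True) \<in> E" "(i, k, False) \<in> E"
  have "{(k, True), (k, False)} \<subseteq> {(k, s). (i, k, s) \<in> E}" using a by auto
  from card_mono[OF fin_out this] show ?thesis by (simp add: out_degree_def)
qed

lemma out_le1_unique:
  assumes "out_degree E i \<le> 1" "(i, k, s) \<in> E" "(i, k', s') \<in> E"
  shows "k = k' \<and> s = s'"
proof -
  have "card {(k, s). (i, k, s) \<in> E} \<le> Suc 0" using assms(1) by (simp add: out_degree_def)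
  then have "\<forall>a1\<in>{(k, s). (i, k, s) \<in> E}. \<forall>a2\<in>{(k, s). (i, k, s) \<in> E}. a1 = a2"
    using card_le_Suc0_iff_eq[OF fin_out] by (simp only:)
  moreover have "(k, s) \<in> {(k, s). (i, k, s) \<in> E}" "(k', s') \<in> {(k, s). (i, k, s) \<in> E}"
    using assms(2,3) by auto
  ultimately have "(k, s) = (k', s')" by (simp only:)
  then show ?thesis by simp
qed

lemma rtrancl_lt: "(j, i) \<in> A\<^sup>* \<Longrightarrow> j \<noteq> i \<Longrightarrow> j < n \<and> i < n"
  by (metis arcs_lt converse_rtranclE rtranclE)

end



context sdg begin

definition anc where "anc a = {b. (b, a) \<in> A\<^sup>*}"

lemma anc_sub: "a < n \<Longrightarrow> anc a \<subseteq> {0..<n}"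
  unfolding anc_def using rtrancl_lt by fastforce

lemma fin_anc: "a < n \<Longrightarrow> finite (anc a)"
  using anc_sub finite_subset by blast

lemma path_in_anc:
  assumes "(u, v) \<in> A\<^sup>*" "(v, a) \<in> A\<^sup>*"
  shows "(u, v) \<in> (A \<inter> anc a \<times> anc a)\<^sup>*"
  using assms
proof (induction rule: converse_rtrancl_induct)
  case base
  then show ?case by simp
next
  case (step y z)
  have "(z, a) \<in> A\<^sup>*" using step by (meson rtrancl_trans)
  moreover have "(y, a) \<in> A\<^sup>*" using step calculation by (meson converse_rtrancl_into_rtrancl)
  ultimately have "(y, z) \<in> A \<inter> anc a \<times> anc a" using step by (auto simp: anc_def)
  then show ?case using step by (meson converse_rtrancl_into_rtrancl)
qed

lemma exists_initial:
  assumes "i < n"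
  shows "\<exists>U u. initial_sc n E U \<and> u \<in> U \<and> (u, i) \<in> A\<^sup>*"
proof -
  have "i \<in> anc i" by (simp add: anc_def)
  then obtain a where a1: "a \<in> anc i" and a2: "\<And>b. b \<in> anc i \<Longrightarrow> card (anc a) \<le> card (anc b)"
    using ex_has_least_nat[of "\<lambda>a. a \<in> anc i" i "\<lambda>a. card (anc a)"] by blast
  have ai: "(a, i) \<in> A\<^sup>*" using a1 by (simp add: anc_def)
  have an: "a < n"
  proof (cases "a = i")
    case True then show ?thesis using assms by simp
  next
    case False then show ?thesis using ai rtrancl_lt by blast
  qed
  have bk: "(a, b) \<in> A\<^sup>*" if "b \<in> anc a" for b
  proof -
    have ba: "(b, a) \<in> A\<^sup>*" using that by (simp add: anc_def)
    have sub: "anc b \<subseteq> anc a"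
    proof
      fix c assume "c \<in> anc b"
      then have "(c, b) \<in> A\<^sup>*" by (simp add: anc_def)
      then have "(c, a) \<in> A\<^sup>*" using ba by (rule rtrancl_trans)
      then show "c \<in> anc a" by (simp add: anc_def)
    qed
    have "(b, i) \<in> A\<^sup>*" using ba ai by (rule rtrancl_trans)
    then have "b \<in> anc i" by (simp add: anc_def)
    then have "card (anc a) \<le> card (anc b)" by (rule a2)
    then have "anc b = anc a" using card_seteq[OF fin_anc[OF an] sub] by simp
    moreover have "b \<in> anc b" by (simp add: anc_def)
    ultimately have "b \<in> anc a" by simp
    have "a \<in> anc b" using \<open>anc b = anc a\<close> by (simp add: anc_def)
    then show ?thesis by (simp add: anc_def)
  qed
  let ?U = "anc a"
  have sc: "strongly_connected_in A ?U"
    unfolding strongly_connected_in_def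
  proof (intro ballI)
    fix u v assume uv: "u \<in> ?U" "v \<in> ?U"
    have "(u, a) \<in> A\<^sup>*" using uv(1) by (simp add: anc_def)
    moreover have "(a, v) \<in> A\<^sup>*" using bk uv(2) by blast
    ultimately have "(u, v) \<in> A\<^sup>*" by (rule rtrancl_trans)
    moreover have "(v, a) \<in> A\<^sup>*" using uv by (simp add: anc_def)
    ultimately show "(u, v) \<in> (A \<inter> ?U \<times> ?U)\<^sup>*" by (rule path_in_anc)
  qed
  have aU: "a \<in> ?U" by (simp add: anc_def)
  have comp: "strong_component n E ?U"
    unfolding strong_component_def
  proof (intro conjI allI impI)
    show "?U \<subseteq> {0..<n}" using anc_sub[OF an] .
    show "?U \<noteq> {}" using aU by blast
    show "strongly_connected_in A ?U" by (rule sc)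
    fix U' assume h: "?U \<subseteq> U' \<and> U' \<subseteq> {0..<n} \<and> strongly_connected_in A U'"
    have "U' \<subseteq> ?U"
    proof
      fix w assume w: "w \<in> U'"
      have aU': "a \<in> U'" using h aU by blast
      have "strongly_connected_in A U'" using h by blast
      then have "(w, a) \<in> (A \<inter> U' \<times> U')\<^sup>*" using w aU' unfolding strongly_connected_in_def by blast
      moreover have "(A \<inter> U' \<times> U') \<subseteq> A" by blast
      ultimately have "(w, a) \<in> A\<^sup>*" using rtrancl_mono by blast
      then show "w \<in> ?U" by (simp add: anc_def)
    qed
    then show "U' = ?U" using h by blast
  qed
  have "\<not> (\<exists>j i'. (j, i') \<in> A \<and> j \<notin> ?U \<and> i' \<in> ?U)"
  proof
    assume "\<exists>j i'. (j, i') \<in> A \<and> j \<notin> ?U \<and> i' \<in> ?U"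
    then obtain j i' where "(j, i') \<in> A" "j \<notin> ?U" "i' \<in> ?U" by blast
    then show False unfolding anc_def by (simp add: converse_rtrancl_into_rtrancl)
  qed
  then have "initial_sc n E ?U"
    unfolding initial_sc_def using comp by simp
  then show ?thesis using ai aU by blast
qed

lemma init_sub: "initial_sc n E U \<Longrightarrow> U \<subseteq> {0..<n}"
  by (simp add: initial_sc_def strong_component_def)

lemma init_fin: "initial_sc n E U \<Longrightarrow> finite U"
  using init_sub finite_subset by blast

lemma init_ne: "initial_sc n E U \<Longrightarrow> U \<noteq> {}"
  by (simp add: initial_sc_def strong_component_def)

lemma init_back:
  assumes "initial_sc n E U" "(w, v) \<in> A\<^sup>*" "v \<in> U"
  shows "w \<in> U"
  using assms(2,3)
proof (induction rule: converse_rtrancl_induct)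
  case base then show ?case .
next
  case (step y z)
  have "\<not> (\<exists>j i. (j, i) \<in> A \<and> j \<notin> U \<and> i \<in> U)"
    using assms(1) unfolding initial_sc_def by simp
  then show ?case using step by blast
qed

lemma init_conn:
  assumes "initial_sc n E U" "u \<in> U" "v \<in> U"
  shows "(u, v) \<in> (A \<inter> U \<times> U)\<^sup>*"
  using assms by (simp add: initial_sc_def strong_component_def strongly_connected_in_def)

lemma nontriv_out:
  assumes "initial_sc n E U" "\<not> trivial_sc E U" "u \<in> U"
  shows "\<exists>w\<in>U. (u, w) \<in> A"
proof (cases "card U = 1")
  case True
  then obtain s where "U = {s}" using card_1_singletonE by blast
  then show ?thesis using assms True by (auto simp: trivial_sc_def)
next
  case False
  have "U \<noteq> {u}" using False by auto
  then obtain v where v: "v \<in> U" "v \<noteq> u" using assms(3) by blast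
  have "(u, v) \<in> (A \<inter> U \<times> U)\<^sup>*" using init_conn assms v by blast
  then obtain w where "(u, w) \<in> A \<inter> U \<times> U" using v(2) by (metis converse_rtranclE)
  then show ?thesis by blast
qed

lemma triv_source:
  assumes "initial_sc n E U" "trivial_sc E U"
  shows "\<exists>s. U = {s} \<and> s < n \<and> (\<forall>j. (j, s) \<notin> A)"
proof -
  obtain s where s: "U = {s}" using assms(2) card_1_singletonE by (auto simp: trivial_sc_def)
  have "s < n" using init_sub[OF assms(1)] s by auto
  moreover have "\<forall>j. (j, s) \<notin> A"
    using assms s unfolding trivial_sc_def initial_sc_def by auto
  ultimately show ?thesis using s by blast
qed

end



lemma funpow_period:
  fixes g :: "'a \<Rightarrow> 'a"
  assumes "(g ^^ a) x = (g ^^ b) x" "a < b"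
  shows "(g ^^ m) x \<in> (\<lambda>k. (g ^^ k) x) ` {..<b}"
proof (induction m rule: less_induct)
  case (less m)
  show ?case
  proof (cases "m < b")
    case True then show ?thesis by blast
  next
    case False
    then obtain c where c: "m = c + b" by (metis add.commute le_add_diff_inverse not_less)
    have "(g ^^ m) x = (g ^^ c) ((g ^^ b) x)" using c by (simp add: funpow_add)
    also have "\<dots> = (g ^^ c) ((g ^^ a) x)" using assms(1) by simp
    also have "\<dots> = (g ^^ (c + a)) x" by (simp add: funpow_add)
    finally have eq: "(g ^^ m) x = (g ^^ (c + a)) x" .
    have "c + a < m" using c assms(2) by simp
    then show ?thesis using less eq by simp
  qed
qed

locale sdg2 = sdg +
  assumes conn: "sd_connected n E" and ncyc: "\<not> is_signed_cycle n E"
begin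

lemma nontriv_ternary:
  assumes U: "initial_sc n E U" "\<not> trivial_sc E U"
  shows "\<exists>q\<in>U. out_degree E q \<ge> 2"
proof (rule ccontr)
  assume "\<not> (\<exists>q\<in>U. out_degree E q \<ge> 2)"
  then have le1: "\<And>u. u \<in> U \<Longrightarrow> out_degree E u \<le> 1" by fastforce
  define g where "g u = (SOME w. (u, w) \<in> A)" for u
  have gU: "g u \<in> U \<and> (u, g u) \<in> A \<and> (\<forall>w. (u, w) \<in> A \<longrightarrow> w = g u)" if uU: "u \<in> U" for u
  proof -
    obtain w0 where w0: "w0 \<in> U" "(u, w0) \<in> A" using nontriv_out[OF U uU] by blast
    have uq: "w = w0" if uw: "(u, w) \<in> A" for w
    proof -
      obtain s where "(u, w, s) \<in> E" using uw by (auto simp: arcs_def)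
      moreover obtain s0 where "(u, w0, s0) \<in> E" using w0 by (auto simp: arcs_def)
      ultimately show ?thesis using out_le1_unique[OF le1[OF \<open>u \<in> U\<close>]] by blast
    qed
    have ga: "(u, g u) \<in> A" unfolding g_def using w0(2) by (rule someI)
    then have "g u = w0" by (rule uq)
    then show ?thesis using ga uq w0 by auto
  qed
  have Usub: "U \<subseteq> {0..<n}" using init_sub[OF U(1)] .
  obtain u0 where u0: "u0 \<in> U" using init_ne[OF U(1)] by blast
  have allU: "{0..<n} \<subseteq> U"
  proof
    fix v assume v: "v \<in> {0..<n}"
    have "u0 < n" using u0 Usub by auto
    then have "(u0, v) \<in> (A \<union> A\<inverse>)\<^sup>*" using conn v by (simp add: sd_connected_def)
    then show "v \<in> U"
    proof (induction rule: rtrancl_induct)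
      case base then show ?case using u0 .
    next
      case (step y z)
      show ?case
      proof (cases "(y, z) \<in> A")
        case True then show ?thesis using gU step by blast
      next
        case False
        then have "(z, y) \<in> A" using step by blast
        then show ?thesis using init_back[OF U(1)] step by blast
      qed
    qed
  qed
  have Ueq: "U = {0..<n}" using allU Usub by blast
  then have n0: "0 \<in> U" using u0 by auto
  have orb: "(g ^^ k) 0 \<in> U" for k
    by (induction k) (auto simp: n0 gU)
  have every: "\<exists>k. v = (g ^^ k) 0" if "v \<in> U" for v
  proof -
    have "(0, v) \<in> (A \<inter> U \<times> U)\<^sup>*" using init_conn[OF U(1) n0 that] .
    then show ?thesis
    proof (induction rule: rtrancl_induct)
      case base then show ?case by (metis funpow_0)
    next
      case (step y z)
      then obtain k where k: "y = (g ^^ k) 0" by blast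
      have "z = g y" using gU step by blast
      then have "z = (g ^^ Suc k) 0" using k by simp
      then show ?case by blast
    qed
  qed
  have cardU: "card U = n" using Ueq by simp
  have inj: "inj_on (\<lambda>k. (g ^^ k) 0) {0..<n}"
  proof (rule inj_onI, rule ccontr)
    fix a b assume ab: "a \<in> {0..<n}" "b \<in> {0..<n}" "(g ^^ a) 0 = (g ^^ b) 0" "a \<noteq> b"
    have "\<exists>a' b'. a' < b' \<and> b' < n \<and> (g ^^ a') 0 = (g ^^ b') 0"
    proof (cases "a < b")
      case True then show ?thesis using ab by auto
    next
      case False then show ?thesis using ab by (metis atLeastLessThan_iff linorder_neqE_nat)
    qed
    then obtain a' b' where ab': "a' < b'" "b' < n" "(g ^^ a') 0 = (g ^^ b') 0" by blast
    have "U \<subseteq> (\<lambda>k. (g ^^ k) 0) ` {..<b'}"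
    proof
      fix v assume "v \<in> U"
      then obtain k where "v = (g ^^ k) 0" using every by blast
      then show "v \<in> (\<lambda>k. (g ^^ k) 0) ` {..<b'}" using funpow_period[OF ab'(3,1)] by simp
    qed
    then have "card U \<le> card ((\<lambda>k. (g ^^ k) 0) ` {..<b'})" by (simp add: card_mono)
    also have "\<dots> \<le> b'" using card_image_le[of "{..<b'}"] by simp
    finally show False using cardU ab'(2) by simp
  qed
  have imgU: "(\<lambda>k. (g ^^ k) 0) ` {0..<n} = U"
  proof (rule card_seteq)
    show "finite U" using Ueq by simp
    show "(\<lambda>k. (g ^^ k) 0) ` {0..<n} \<subseteq> U" using orb by blast
    show "card U \<le> card ((\<lambda>k. (g ^^ k) 0) ` {0..<n})" using card_image[OF inj] cardU by simp
  qed
  have npos: "n > 0" using n0 Ueq by simp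
  have gn: "(g ^^ n) 0 = 0"
  proof -
    obtain w where w: "w \<in> U" "(w, 0) \<in> A"
    proof (cases "g 0 = 0")
      case True then show ?thesis using that gU n0 by metis
    next
      case False
      have "(g 0, 0) \<in> (A \<inter> U \<times> U)\<^sup>*" using init_conn[OF U(1)] gU n0 by blast
      then obtain w where "(w, 0) \<in> A \<inter> U \<times> U" using False by (metis rtranclE)
      then show ?thesis using that by blast
    qed
    obtain c where c: "c < n" "w = (g ^^ c) 0" using w(1) imgU by force
    have "0 = g w" using gU w by blast
    then have e: "(g ^^ Suc c) 0 = (g ^^ 0) 0" using c by simp
    show ?thesis
    proof (cases "Suc c < n")
      case True
      then have "Suc c = 0" using inj_onD[OF inj e] by simp
      then show ?thesis by simp
    next
      case False
      then have "Suc c = n" using c by simp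
      then show ?thesis using e by simp
    qed
  qed
  define vs where "vs = map (\<lambda>k. (g ^^ k) 0) [0..<n]"
  have vsn: "k < n \<Longrightarrow> vs ! k = (g ^^ k) 0" for k by (simp add: vs_def)
  have nxt: "k < n \<Longrightarrow> vs ! ((k + 1) mod n) = g (vs ! k)" for k
  proof -
    assume k: "k < n"
    show ?thesis
    proof (cases "k + 1 < n")
      case True then show ?thesis using k by (simp add: vsn)
    next
      case False
      then have "k + 1 = n" using k by simp
      then have "g (vs ! k) = (g ^^ n) 0" using k vsn by (metis Suc_eq_plus1 funpow.simps(2) o_apply)
      then show ?thesis using gn \<open>k + 1 = n\<close> npos by (simp add: vsn)
    qed
  qed
  have cyc: "is_signed_cycle n E"
    unfolding is_signed_cycle_def
  proof (intro conjI exI)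
    show "length vs = n" by (simp add: vs_def)
    show "distinct vs" unfolding vs_def using inj by (simp add: distinct_map)
    show "set vs = {0..<n}" using imgU Ueq by (simp add: vs_def)
    show "arcs E = {(vs ! k, vs ! ((k + 1) mod n)) |k. k < n}"
    proof (intro equalityI subsetI)
      fix p assume p: "p \<in> arcs E"
      obtain x y where xy: "p = (x, y)" by fastforce
      have xU: "x \<in> U" using p xy arcs_lt Ueq by auto
      then obtain k where k: "k < n" "x = (g ^^ k) 0" using imgU by force
      have "y = g x" using gU xU p xy by blast
      then have "p = (vs ! k, vs ! ((k + 1) mod n))" using xy k nxt vsn by simp
      then show "p \<in> {(vs ! k, vs ! ((k + 1) mod n)) |k. k < n}" using k by blast
    next
      fix p assume "p \<in> {(vs ! k, vs ! ((k + 1) mod n)) |k. k < n}"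
      then obtain k where k: "k < n" "p = (vs ! k, vs ! ((k + 1) mod n))" by blast
      have "vs ! k \<in> U" using k vsn orb by simp
      then have "(vs ! k, g (vs ! k)) \<in> A" using gU by blast
      then show "p \<in> arcs E" using k nxt by simp
    qed
    show "\<not> (\<exists>j i. (j, i, True) \<in> E \<and> (j, i, False) \<in> E)"
    proof
      assume "\<exists>j i. (j, i, True) \<in> E \<and> (j, i, False) \<in> E"
      then obtain j i where ji: "(j, i, True) \<in> E" "(j, i, False) \<in> E" by blast
      then have "j \<in> U" using Esub Ueq by auto
      then show False using out_ge2[OF ji] le1 by fastforce
    qed
  qed
  then show False using ncyc by simp
qed

end



context sdg begin

definition pos where "pos j i \<longleftrightarrow> (j, i, True) \<in> E"
definition neg where "neg j i \<longleftrightarrow> (j, i, False) \<in> E"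
definition tern where "tern j \<longleftrightarrow> out_degree E j \<ge> 2"
definition hi :: "nat \<Rightarrow> int" where
  "hi j = (if j < n then (if tern j then 2 else if out_degree E j = 0 \<and> in_degree E j = 0 then 0 else 1) else 0)"
definition L :: "nat \<Rightarrow> nat \<Rightarrow> int \<Rightarrow> bool" where
  "L j i v = (if pos j i \<and> neg j i then v = 1 else if pos j i then v \<ge> hi j else v \<le> hi j - 1)"
definition G where "G i = {j. (j, i) \<in> A}"
definition rq where "rq q = (SOME r. (q, r) \<in> A \<and> (r, q) \<in> A\<^sup>*)"
definition top :: "nat \<Rightarrow> int" where
  "top q = (if tern q \<and> pos q (rq q) \<and> neg q (rq q) then 2 else 1)"
definition src where "src i \<longleftrightarrow> i < n \<and> (\<forall>j. (j, i) \<notin> A)"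
definition roots2 where "roots2 = {r. \<exists>q. tern q \<and> (q, rq q) \<in> A \<and> r = rq q}"
definition cq where "cq r = (SOME q. tern q \<and> (q, rq q) \<in> A \<and> r = rq q)"
definition cval where "cval r = L (cq r) r 0"

lemma G_arc: "j \<in> G i \<longleftrightarrow> (j, i) \<in> A" by (simp add: G_def)

lemma arc_sign: "(j, i) \<in> A \<Longrightarrow> pos j i \<or> neg j i"
  by (auto simp: arcs_def pos_def neg_def) (metis (full_types))

lemma arc_pos_neg: "pos j i \<Longrightarrow> (j, i) \<in> A" "neg j i \<Longrightarrow> (j, i) \<in> A"
  by (auto simp: arcs_def pos_def neg_def)

lemma hi_out: assumes "(j, i) \<in> A" shows "1 \<le> hi j" "hi j \<le> 2"
proof -
  have "j < n" using arcs_lt assms by blast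
  moreover have "out_degree E j \<noteq> 0" using out0_iff assms by blast
  ultimately show "1 \<le> hi j" "hi j \<le> 2" by (auto simp: hi_def)
qed

lemma hi_both: assumes "pos j i" "neg j i" shows "hi j = 2"
proof -
  have "j < n" using arcs_lt arc_pos_neg assms by blast
  moreover have "tern j" using out_ge2 assms by (simp add: tern_def pos_def neg_def)
  ultimately show ?thesis by (simp add: hi_def)
qed

lemma hi_in: assumes "(j, i) \<in> A" shows "1 \<le> hi i"
proof -
  have "i < n" using arcs_lt assms by blast
  moreover have "in_degree E i \<noteq> 0" using in0_iff assms by blast
  ultimately show ?thesis by (auto simp: hi_def)
qed

lemma hi_nonneg: "0 \<le> hi j" by (simp add: hi_def)

lemma top_le_hi: assumes "(j, i) \<in> A" shows "1 \<le> top i" "top i \<le> hi i"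
proof -
  show "1 \<le> top i" by (simp add: top_def)
  have "i < n" using arcs_lt assms by blast
  then show "top i \<le> hi i" using hi_in[OF assms] by (auto simp: top_def hi_def split: if_splits)
qed

definition w :: "nat \<Rightarrow> nat \<Rightarrow> bool \<Rightarrow> int" where
  "w k i c = (if c then (if pos k i \<and> neg k i then 1 else if pos k i then hi k else 0)
              else (if pos k i \<and> neg k i then 0 else if pos k i then 0 else hi k))"

lemma w_props: assumes "(k, i) \<in> A"
  shows "L k i (w k i c) = c" "0 \<le> w k i c" "w k i c \<le> hi k"
proof -
  have h1: "1 \<le> hi k" using hi_out[OF assms] by simp
  have s: "pos k i \<or> neg k i" using arc_sign[OF assms] .
  show "L k i (w k i c) = c"
    using h1 s by (cases c) (auto simp: L_def w_def hi_both)
  show "0 \<le> w k i c" "w k i c \<le> hi k"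
    using h1 s hi_nonneg[of k] by (auto simp: w_def hi_both)
qed

lemma L_step_up:
  assumes "(j, i) \<in> A" "\<not> L j i v" "L j i (v + 1)"
  shows "pos j i"
  using assms by (auto simp: L_def split: if_splits)

lemma L_step_down:
  assumes "(j, i) \<in> A" "L j i v" "\<not> L j i (v + 1)"
  shows "neg j i"
  using assms arc_sign[OF assms(1)] by (auto simp: L_def split: if_splits)

end



context sdg begin

inductive rb :: "nat \<Rightarrow> nat \<Rightarrow> bool" where
  rsrc: "src i \<Longrightarrow> rb (Suc t) i"
| rroot: "i \<in> roots2 \<Longrightarrow> rb (Suc (Suc t)) i"
| rstep: "rb t j \<Longrightarrow> (j, i) \<in> A \<Longrightarrow> rb (Suc t) i"

definition rank where "rank i = (LEAST t. rb t i)"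
definition par where "par i = (SOME j. (j, i) \<in> A \<and> (\<exists>t. rb t j) \<and> rank j < rank i)"

fun bf :: "nat \<Rightarrow> nat \<Rightarrow> bool" where
  "bf 0 i = False"
| "bf (Suc m) i = (if src i then False else if i \<in> roots2 then cval i
     else L (par i) i (if bf m (par i) then top (par i) else 0))"

definition b where "b i = bf (rank i) i"
definition val :: "nat \<Rightarrow> int" where "val i = (if b i then top i else 0)"

definition F :: "(nat \<Rightarrow> int) \<Rightarrow> (nat \<Rightarrow> int)" where
  "F x i = (if i < n \<and> G i \<noteq> {} \<and>
              (if b i then (\<exists>k\<in>G i. L k i (x k)) else (\<forall>k\<in>G i. L k i (x k))) then top i else 0)"

abbreviation lo0 :: "nat \<Rightarrow> int" where "lo0 \<equiv> \<lambda>_. 0"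
abbreviation X where "X \<equiv> state_space n lo0 hi"

lemma F_vals: "F x i = 0 \<or> (F x i = top i \<and> i < n \<and> G i \<noteq> {})"
  by (auto simp: F_def)

lemma F_in: "F x \<in> X"
proof -
  have "0 \<le> F x i \<and> F x i \<le> hi i" if "i < n" for i
  proof (cases "F x i = 0")
    case True then show ?thesis by (simp add: hi_nonneg)
  next
    case False
    then have "F x i = top i" "G i \<noteq> {}" using F_vals by blast+
    then obtain j where "(j, i) \<in> A" by (auto simp: G_def)
    then show ?thesis using top_le_hi \<open>F x i = top i\<close> by fastforce
  qed
  moreover have "F x i = 0" if "n \<le> i" for i using that by (simp add: F_def)
  ultimately show ?thesis by (simp add: state_space_def)
qed

lemma isFDS: "is_FDS n lo0 hi F"
  using F_in by (simp add: is_FDS_def hi_nonneg)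

definition P where "P i y = (if b i then (\<exists>k\<in>G i. L k i (y k)) else (\<forall>k\<in>G i. L k i (y k)))"

lemma F_P: "F x i = (if i < n \<and> G i \<noteq> {} \<and> P i x then top i else 0)"
  by (simp add: F_def P_def)

lemma gate_change:
  assumes "P i (x(j := v)) \<noteq> P i x"
  shows "j \<in> G i \<and> (P i (x(j := v)) \<longrightarrow> L j i v \<and> \<not> L j i (x j))
          \<and> (P i x \<longrightarrow> L j i (x j) \<and> \<not> L j i v)"
proof -
  have same: "k \<noteq> j \<Longrightarrow> L k i ((x(j := v)) k) = L k i (x k)" for k by simp
  show ?thesis
  proof (cases "b i")
    case True
    then show ?thesis using assms same unfolding P_def
      by (smt (verit, best) fun_upd_same)
  next
    case False
    then show ?thesis using assms same unfolding P_def
      by (smt (verit, best) fun_upd_same)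
  qed
qed

lemma top_pos: "0 < top i" by (simp add: top_def)

lemma ig_sub: "interaction_graph n lo0 hi F \<subseteq> E"
proof
  fix e assume e: "e \<in> interaction_graph n lo0 hi F"
  obtain j i s where jis: "e = (j, i, s)" by (cases e) auto
  from e jis obtain x where j: "j < n" and i: "i < n" and x: "x \<in> X" and xj: "x j < hi j"
    and sg: "if s then F (x(j := x j + 1)) i - F x i > 0 else F (x(j := x j + 1)) i - F x i < 0"
    by (auto simp: interaction_graph_def)
  let ?x' = "x(j := x j + 1)"
  have ne: "F ?x' i \<noteq> F x i" using sg by (cases s) auto
  then have Gne: "G i \<noteq> {}" by (auto simp: F_P split: if_splits)
  have Pne: "P i ?x' \<noteq> P i x"
  proof
    assume "P i ?x' = P i x"
    then have "F ?x' i = F x i" by (simp add: F_P)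
    with ne show False by simp
  qed
  note gc = gate_change[OF Pne]
  have jG: "(j, i) \<in> A" using gc by (simp add: G_arc)
  show "e \<in> E"
  proof (cases s)
    case True
    then have "P i ?x' \<and> \<not> P i x" using sg top_pos[of i] by (auto simp: F_P split: if_splits)
    then have "pos j i" using gc L_step_up[OF jG] by blast
    then show ?thesis using jis True by (simp add: pos_def)
  next
    case False
    then have "P i x \<and> \<not> P i ?x'" using sg top_pos[of i] by (auto simp: F_P split: if_splits)
    then have "neg j i" using gc L_step_down[OF jG] by blast
    then show ?thesis using jis False by (simp add: neg_def)
  qed
qed

lemma ig_sup: "E \<subseteq> interaction_graph n lo0 hi F"
proof
  fix e assume eE: "e \<in> E"
  obtain j i s where jis: "e = (j, i, s)" by (cases e) auto
  have jiA: "(j, i) \<in> A" using eE jis by (auto simp: arcs_def)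
  have j: "j < n" and i: "i < n" using arcs_lt[OF jiA] by auto
  have jGi: "j \<in> G i" using jiA by (simp add: G_arc)
  define xj :: int where "xj = (if s then (if pos j i \<and> neg j i then 0 else hi j - 1)
                          else (if pos j i \<and> neg j i then 1 else hi j - 1))"
  define x where "x k = (if k = j then xj else if k \<in> G i then w k i (\<not> b i) else 0)" for k
  have h1: "1 \<le> hi j" using hi_out[OF jiA] by simp
  have xjb: "0 \<le> xj \<and> xj < hi j" using h1 hi_both[of j i] by (auto simp: xj_def)
  have xX: "x \<in> X"
  proof -
    have "0 \<le> x k \<and> x k \<le> hi k" if "k < n" for k
      using xjb w_props[of k i] hi_nonneg[of k] by (auto simp: x_def G_arc)
    moreover have "x k = 0" if "n \<le> k" for k
      using that j arcs_lt[of k i] by (auto simp: x_def G_arc)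
    ultimately show ?thesis by (simp add: state_space_def)
  qed
  have Pv: "P i (x(j := v)) = L j i v" for v
  proof -
    have oth: "k \<in> G i \<Longrightarrow> k \<noteq> j \<Longrightarrow> L k i ((x(j := v)) k) = (\<not> b i)" for k
      using w_props(1)[of k i] by (simp add: x_def G_arc)
    show ?thesis
    proof (cases "b i")
      case True then show ?thesis using oth jGi unfolding P_def by (metis fun_upd_same)
    next
      case False then show ?thesis using oth jGi unfolding P_def by (metis fun_upd_same)
    qed
  qed
  have xxj: "x(j := x j) = x" by simp
  have Lvals: "(if s then \<not> L j i xj \<and> L j i (xj + 1) else L j i xj \<and> \<not> L j i (xj + 1))"
  proof (cases s)
    case True
    then have "pos j i" using eE jis by (simp add: pos_def)
    then show ?thesis using True h1 hi_both[of j i] by (auto simp: xj_def L_def)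
  next
    case False
    then have "neg j i" using eE jis by (simp add: neg_def)
    then show ?thesis using False h1 hi_both[of j i] by (auto simp: xj_def L_def)
  qed
  have F1: "F (x(j := x j + 1)) i = (if L j i (xj + 1) then top i else 0)"
    using Pv[of "x j + 1"] i jGi by (auto simp: F_P x_def)
  have F0: "F x i = (if L j i xj then top i else 0)"
    using Pv[of "x j"] i jGi xxj by (auto simp: F_P x_def)
  have "if s then F (x(j := x j + 1)) i - F x i > 0 else F (x(j := x j + 1)) i - F x i < 0"
    using Lvals F1 F0 top_pos[of i] by (cases s) auto
  moreover have "x j < hi j" using xjb by (simp add: x_def)
  ultimately show "e \<in> interaction_graph n lo0 hi F"
    using jis i j xX by (auto simp: interaction_graph_def)
qed

lemma ig_eq: "interaction_graph n lo0 hi F = E"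
  using ig_sub ig_sup by blast

end



context sdg begin

lemma rb_lt: "rb t i \<Longrightarrow> i < n"
proof (induction rule: rb.induct)
  case (rsrc i t) then show ?case by (simp add: src_def)
next
  case (rroot i t)
  then obtain q where "(q, rq q) \<in> A" "i = rq q" by (auto simp: roots2_def)
  then show ?case using arcs_lt by blast
next
  case (rstep t j i) then show ?case using arcs_lt by blast
qed

lemma rb_Suc: "rb t i \<Longrightarrow> rb (Suc t) i"
proof (induction rule: rb.induct)
  case (rsrc i t) then show ?case by (rule rb.rsrc)
next
  case (rroot i t) then show ?case by (rule rb.rroot)
next
  case (rstep t j i) then show ?case using rb.rstep by blast
qed

lemma rb_mono: assumes "rb t i" "t \<le> t'" shows "rb t' i"
  using assms(2)
proof (induction t' rule: dec_induct)
  case base then show ?case using assms(1) .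
next
  case (step m) then show ?case using rb_Suc by blast
qed

lemma rb0: "\<not> rb 0 i"
  by (auto elim: rb.cases)

lemma rb1: "rb (Suc 0) i \<Longrightarrow> src i"
  by (auto elim: rb.cases simp: rb0)

lemma rank_rb: "rb t i \<Longrightarrow> rb (rank i) i \<and> rank i \<le> t"
  unfolding rank_def by (meson LeastI Least_le)

lemma rank_pos: "rb t i \<Longrightarrow> rank i \<ge> 1"
  using rank_rb rb0 by (metis less_one not_le)

lemma par_prop:
  assumes "rb t i" "\<not> src i" "i \<notin> roots2"
  shows "(par i, i) \<in> A \<and> (\<exists>t. rb t (par i)) \<and> rank (par i) < rank i"
proof -
  have r: "rb (rank i) i" using rank_rb[OF assms(1)] by blast
  have "\<exists>j. (j, i) \<in> A \<and> (\<exists>t. rb t j) \<and> rank j < rank i"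
    using r
  proof (cases rule: rb.cases)
    case (rsrc t) then show ?thesis using assms by simp
  next
    case (rroot t) then show ?thesis using assms by simp
  next
    case (rstep t j)
    then have "rank j \<le> t" using rank_rb by blast
    then show ?thesis using rstep by (intro exI[of _ j]) auto
  qed
  then show ?thesis unfolding par_def by (rule someI_ex)
qed

lemma bf_stable: "rb t i \<Longrightarrow> rank i \<le> m \<Longrightarrow> bf m i = b i"
proof (induction m arbitrary: i t rule: less_induct)
  case (less m)
  have rp: "rank i \<ge> 1" using rank_pos less.prems(1) .
  then obtain r' where r': "rank i = Suc r'" by (metis Suc_le_D One_nat_def)
  obtain m' where m': "m = Suc m'" using less.prems(2) r' by (metis Suc_le_D)
  show ?case
  proof (cases "src i \<or> i \<in> roots2")
    case True
    then show ?thesis using r' m' by (auto simp: b_def)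
  next
    case False
    note pp = par_prop[OF less.prems(1)] 
    obtain tp where tp: "rb tp (par i)" using pp False by blast
    have rpl: "rank (par i) < rank i" using pp False by blast
    have "bf m' (par i) = b (par i)"
      using less.IH[of m' tp "par i"] tp rpl r' m' less.prems(2) by simp
    moreover have "bf r' (par i) = b (par i)"
      using less.IH[of r' tp "par i"] tp rpl r' m' less.prems(2) by simp
    ultimately show ?thesis using False r' m' by (simp add: b_def)
  qed
qed

lemma b_src: "src i \<Longrightarrow> rb t i \<Longrightarrow> \<not> b i"
  using rank_pos[of t i] by (auto simp: b_def dest!: Suc_le_D)

lemma b_root: "i \<in> roots2 \<Longrightarrow> \<not> src i \<Longrightarrow> rb t i \<Longrightarrow> b i = cval i"
  using rank_pos[of t i] by (auto simp: b_def dest!: Suc_le_D)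

lemma b_par: assumes "rb t i" "\<not> src i" "i \<notin> roots2"
  shows "b i = L (par i) i (val (par i))"
proof -
  note pp = par_prop[OF assms]
  obtain tp where tp: "rb tp (par i)" using pp by blast
  obtain r' where r': "rank i = Suc r'" using rank_pos[OF assms(1)] by (metis Suc_le_D One_nat_def)
  have "bf r' (par i) = b (par i)" using bf_stable[OF tp] pp r' by simp
  then show ?thesis using assms r' by (simp add: b_def val_def)
qed

lemma cq_prop: "r \<in> roots2 \<Longrightarrow> tern (cq r) \<and> (cq r, rq (cq r)) \<in> A \<and> r = rq (cq r)"
  unfolding roots2_def cq_def by (rule someI_ex) blast

lemma collapse:
  assumes "r \<in> roots2" "v = 0 \<or> v = top (cq r)"
  shows "L (cq r) r v = cval r"
proof -
  let ?q = "cq r"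
  note c = cq_prop[OF assms(1)]
  have qn: "?q < n" using c arcs_lt by blast
  have h2: "hi ?q = 2" using c qn by (simp add: hi_def)
  have t: "top ?q = (if pos ?q r \<and> neg ?q r then 2 else 1)" using c by (simp add: top_def)
  show ?thesis using assms(2) h2 t by (auto simp: cval_def L_def)
qed

lemma canal:
  assumes "i < n" "(k, i) \<in> A" "L k i (y k) = b i"
  shows "F y i = val i"
proof -
  have kG: "k \<in> G i" using assms(2) by (simp add: G_arc)
  then have "G i \<noteq> {}" by blast
  moreover have "P i y = b i" using kG assms(3) unfolding P_def by auto
  ultimately show ?thesis using assms(1) by (simp add: F_P val_def)
qed

lemma funpow_in: "x \<in> X \<Longrightarrow> (F ^^ t) x \<in> X"
  by (induction t) (auto simp: F_in)

lemma determ: "rb t i \<Longrightarrow> x \<in> X \<Longrightarrow> (F ^^ t) x i = val i"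
proof (induction t arbitrary: i rule: less_induct)
  case (less t)
  have t1: "t \<ge> 1" using rank_pos[OF less.prems(1)] rank_rb[OF less.prems(1)] by simp
  then obtain t' where t': "t = Suc t'" by (metis Suc_le_D One_nat_def)
  define y where "y = (F ^^ t') x"
  have Ft: "(F ^^ t) x = F y" using t' by (simp add: y_def)
  have iN: "i < n" using rb_lt less.prems(1) by blast
  show ?case
  proof (cases "src i")
    case True
    then have "G i = {}" by (auto simp: src_def G_def)
    then have "F y i = 0" by (simp add: F_def)
    then show ?thesis using Ft b_src[OF True less.prems(1)] by (simp add: val_def)
  next
    case nsrc: False
    show ?thesis
    proof (cases "i \<in> roots2")
      case True
      have "t \<noteq> Suc 0" using nsrc rb1 less.prems(1) by blast
      then obtain t'' where t'': "t' = Suc t''" using t' t1 by (metis not0_implies_Suc)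
      have yF: "y = F ((F ^^ t'') x)" using t'' by (simp add: y_def)
      let ?q = "cq i"
      have "y ?q = 0 \<or> y ?q = top ?q" using yF F_vals by metis
      then have "L ?q i (y ?q) = cval i" using collapse[OF True] by blast
      also have "\<dots> = b i" using b_root[OF True nsrc less.prems(1)] by simp
      finally have "L ?q i (y ?q) = b i" .
      moreover have "(?q, i) \<in> A" using cq_prop[OF True] by metis
      ultimately show ?thesis using canal iN Ft by simp
    next
      case nroot: False
      note pp = par_prop[OF less.prems(1) nsrc nroot]
      obtain tp where tp: "rb tp (par i)" using pp by blast
      have "rank (par i) \<le> t'" using pp rank_rb[OF less.prems(1)] t' by simp
      then have "rb t' (par i)" using rank_rb[OF tp] rb_mono by blast
      then have "y (par i) = val (par i)" using less.IH[of t'] t' less.prems(2) by (simp add: y_def)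
      then have "L (par i) i (y (par i)) = b i" using b_par[OF less.prems(1) nsrc nroot] by simp
      then have "F y i = val i" using canal[OF iN] pp by blast
      then show ?thesis using Ft by simp
    qed
  qed
qed

end



lemma exit_lemma:
  assumes "(x, y) \<in> R\<^sup>*" "x \<in> S" "y \<notin> S"
  shows "\<exists>a c. (a, c) \<in> R \<and> a \<in> S \<and> c \<notin> S"
  using assms
proof (induction rule: rtrancl_induct)
  case base then show ?case by simp
next
  case (step y z)
  show ?case
  proof (cases "y \<in> S")
    case True then show ?thesis using step by blast
  next
    case False then show ?thesis using step by blast
  qed
qed

context sdg begin

lemma path_rb: "(u, i) \<in> A ^^ d \<Longrightarrow> rb t u \<Longrightarrow> rb (t + d) i"
proof (induction d arbitrary: i)
  case 0 then show ?case by simp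
next
  case (Suc d)
  from Suc.prems(1) obtain y where "(u, y) \<in> A ^^ d" "(y, i) \<in> A" by (rule relpow_Suc_E)
  then have "rb (t + d) y" using Suc by blast
  then show ?case using \<open>(y, i) \<in> A\<close> rb.rstep by fastforce
qed

end

context sdg2 begin

lemma root_in_U:
  assumes U: "initial_sc n E U" "\<not> trivial_sc E U"
  shows "\<exists>r\<in>U. r \<in> roots2"
proof -
  obtain q where q: "q \<in> U" "tern q" using nontriv_ternary[OF U] by (auto simp: tern_def)
  obtain r0 where r0: "r0 \<in> U" "(q, r0) \<in> A" using nontriv_out[OF U q(1)] by blast
  have "(r0, q) \<in> (A \<inter> U \<times> U)\<^sup>*" using init_conn[OF U(1) r0(1) q(1)] .
  moreover have "A \<inter> U \<times> U \<subseteq> A" by blast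
  ultimately have "(r0, q) \<in> A\<^sup>*" using rtrancl_mono by blast
  then have ex: "\<exists>r. (q, r) \<in> A \<and> (r, q) \<in> A\<^sup>*" using r0 by blast
  have rq: "(q, rq q) \<in> A \<and> (rq q, q) \<in> A\<^sup>*" unfolding rq_def using someI_ex[OF ex] .
  then have "rq q \<in> U" using init_back[OF U(1)] q(1) by blast
  moreover have "rq q \<in> roots2" using rq q(2) by (auto simp: roots2_def)
  ultimately show ?thesis by blast
qed

lemma nontriv_rank:
  assumes U: "initial_sc n E U" "\<not> trivial_sc E U"
  shows "\<forall>u\<in>U. rb (Suc (card U)) u"
proof -
  obtain r where r: "r \<in> U" "r \<in> roots2" using root_in_U[OF U] by blast
  have r2: "rb (Suc (Suc 0)) r" using rb.rroot[OF r(2), of 0] .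
  have finU: "finite U" using init_fin[OF U(1)] .
  define S where "S t = {u \<in> U. rb t u}" for t
  have Ssub: "S t \<subseteq> U" for t by (auto simp: S_def)
  have Sfin: "finite (S t)" for t using finU Ssub finite_subset by blast
  have Smono: "S t \<subseteq> S (Suc t)" for t using rb_Suc by (auto simp: S_def)
  have grow: "S (Suc (Suc t)) = U \<or> Suc t \<le> card (S (Suc (Suc t)))" for t
  proof (induction t)
    case 0
    have "r \<in> S (Suc (Suc 0))" using r r2 by (simp add: S_def)
    then have "S (Suc (Suc 0)) \<noteq> {}" by blast
    then have "card (S (Suc (Suc 0))) \<noteq> 0" using Sfin by simp
    then show ?case by simp
  next
    case (Suc t)
    have sm: "S (Suc (Suc t)) \<subseteq> S (Suc (Suc (Suc t)))" using Smono .
    show ?case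
    proof (cases "S (Suc (Suc t)) = U")
      case True
      then show ?thesis using sm Ssub[of "Suc (Suc (Suc t))"] by blast
    next
      case False
      then obtain v where v: "v \<in> U" "v \<notin> S (Suc (Suc t))" using Ssub by blast
      have "rb (Suc (Suc t)) r" using rb_mono[OF r2] by simp
      then have "r \<in> S (Suc (Suc t))" using r by (simp add: S_def)
      moreover have "(r, v) \<in> (A \<inter> U \<times> U)\<^sup>*" using init_conn[OF U(1) r(1) v(1)] .
      ultimately obtain a c where ac: "(a, c) \<in> A \<inter> U \<times> U" "a \<in> S (Suc (Suc t))" "c \<notin> S (Suc (Suc t))"
        using exit_lemma v(2) by metis
      have "rb (Suc (Suc (Suc t))) c" using ac rb.rstep by (auto simp: S_def)
      then have "c \<in> S (Suc (Suc (Suc t)))" using ac by (simp add: S_def)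
      then have "insert c (S (Suc (Suc t))) \<subseteq> S (Suc (Suc (Suc t)))" using sm by blast
      then have "card (insert c (S (Suc (Suc t)))) \<le> card (S (Suc (Suc (Suc t))))"
        using Sfin by (rule card_mono[rotated])
      moreover have "card (insert c (S (Suc (Suc t)))) = Suc (card (S (Suc (Suc t))))"
        using ac(3) Sfin by simp
      ultimately show ?thesis using Suc.IH False by simp
    qed
  qed
  have cpos: "card U \<noteq> 0" using init_ne[OF U(1)] finU by simp
  then obtain c where c: "card U = Suc c" using not0_implies_Suc by blast
  have "S (Suc (card U)) = U"
  proof -
    have "S (Suc (Suc c)) = U \<or> Suc c \<le> card (S (Suc (Suc c)))" using grow .
    then show ?thesis using card_seteq[OF finU Ssub] c by auto
  qed
  then show ?thesis by (auto simp: S_def)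
qed

lemma timing:
  assumes i: "i < n"
  shows "rb (the_enat (lambda_G n E) + beta n E) i"
proof -
  let ?IS = "{U. initial_sc n E U}"
  have finIS: "finite ?IS"
  proof -
    have "?IS \<subseteq> Pow {0..<n}" using init_sub by blast
    then show ?thesis using finite_subset by blast
  qed
  define val_of where "val_of j U = sd_dist_set E U j + enat (card U)" for j U
  define M where "M j = Min ((\<lambda>U. val_of j U) ` ?IS)" for j
  have lam: "lambda_G n E = Max (M ` {0..<n})"
    by (simp add: lambda_G_def M_def val_of_def)
  have Mfin: "M j \<noteq> \<infinity> \<and> (\<exists>U\<in>?IS. M j = val_of j U)" if j: "j < n" for j
  proof -
    obtain U0 u0 where U0: "initial_sc n E U0" "u0 \<in> U0" "(u0, j) \<in> A\<^sup>*"
      using exists_initial[OF j] by blast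
    have ne: "(\<lambda>U. val_of j U) ` ?IS \<noteq> {}" using U0 by blast
    have fin: "finite ((\<lambda>U. val_of j U) ` ?IS)" using finIS by simp
    have "sd_dist E u0 j \<noteq> \<infinity>" using U0(3) by (simp add: sd_dist_def)
    moreover have "sd_dist_set E U0 j \<le> sd_dist E u0 j"
      unfolding sd_dist_set_def using init_fin[OF U0(1)] U0(2) by (simp add: Min_le)
    ultimately have "sd_dist_set E U0 j \<noteq> \<infinity>" using top.extremum_unique by fastforce
    then obtain k where "sd_dist_set E U0 j = enat k" by auto
    then have "val_of j U0 \<noteq> \<infinity>" by (simp add: val_of_def)
    moreover have "M j \<le> val_of j U0" unfolding M_def using fin U0(1) by (simp add: Min_le)
    ultimately have "M j \<noteq> \<infinity>" using top.extremum_unique by fastforce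
    moreover have "M j \<in> (\<lambda>U. val_of j U) ` ?IS" unfolding M_def using Min_in[OF fin ne] .
    ultimately show ?thesis by blast
  qed
  have Mle: "M i \<le> lambda_G n E" unfolding lam using i by simp
  have "lambda_G n E \<in> M ` {0..<n}" unfolding lam using i by (intro Max_in) auto
  then have lamfin: "lambda_G n E \<noteq> \<infinity>" using Mfin by auto
  obtain U where U: "initial_sc n E U" "M i = val_of i U" using Mfin[OF i] by blast
  have Mi: "M i \<noteq> \<infinity>" using Mfin[OF i] by blast
  have finU: "finite U" using init_fin[OF U(1)] .
  have neU: "U \<noteq> {}" using init_ne[OF U(1)] .
  have "sd_dist_set E U i \<in> (\<lambda>j. sd_dist E j i) ` U"
    unfolding sd_dist_set_def using finU neU by (intro Min_in) auto
  then obtain u where u: "u \<in> U" "sd_dist_set E U i = sd_dist E u i" by blast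
  have "sd_dist E u i + enat (card U) \<noteq> \<infinity>" using Mi U(2) u(2) by (simp add: val_of_def)
  then have "sd_dist E u i \<noteq> \<infinity>" by (cases "sd_dist E u i") simp_all
  then have ui: "(u, i) \<in> A\<^sup>*" by (auto simp: sd_dist_def split: if_splits)
  define d where "d = (LEAST k. (u, i) \<in> A ^^ k)"
  have sdd: "sd_dist E u i = enat d" using ui by (simp add: sd_dist_def d_def)
  have ud: "(u, i) \<in> A ^^ d" unfolding d_def using ui rtrancl_power by (metis LeastI_ex)
  have Mi_eq: "M i = enat (d + card U)" using U(2) u(2) sdd by (simp add: val_of_def)
  have urb: "rb (card U + beta n E) u"
  proof (cases "trivial_sc E U")
    case True
    then obtain s where s: "U = {s}" "s < n" "\<forall>j. (j, s) \<notin> A" using triv_source[OF U(1)] by blast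
    then have "src s" by (simp add: src_def)
    then have "rb (Suc 0) s" by (rule rb.rsrc)
    then show ?thesis using s u rb_mono by fastforce
  next
    case False
    then have "\<not> basic n E" using U(1) by (auto simp: basic_def)
    then have "beta n E = 1" by (simp add: beta_def)
    then show ?thesis using nontriv_rank[OF U(1) False] u by simp
  qed
  have "rb (card U + beta n E + d) i" using path_rb[OF ud urb] .
  moreover have "card U + beta n E + d \<le> the_enat (lambda_G n E) + beta n E"
  proof -
    obtain l where l: "lambda_G n E = enat l" using lamfin by (cases "lambda_G n E") auto
    have "d + card U \<le> l" using Mle Mi_eq l by simp
    then show ?thesis using l by simp
  qed
  ultimately show ?thesis using rb_mono by blast
qed

end



theorem theorem7:
  fixes n :: nat and E :: "(nat \<times> nat \<times> bool) set"
  assumes "E \<subseteq> {0..<n} \<times> {0..<n} \<times> UNIV"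
    and "sd_connected n E"
    and "\<not> is_signed_cycle n E"
  shows "\<exists>lo hi f \<xi>. is_FDS n lo hi f \<and> interaction_graph n lo hi f = E \<and>
           degree_bounded n lo hi f \<and> \<xi> \<in> state_space n lo hi \<and>
           (\<forall>x\<in>state_space n lo hi. (f ^^ (the_enat (lambda_G n E) + beta n E)) x = \<xi>) \<and>
           (\<forall>i<n. in_degree E i = 0 \<longrightarrow> \<xi> i = lo i)"
proof -
  interpret I: sdg2 n E
    using assms by (simp add: sdg2_def sdg_def sdg2_axioms_def)
  define K where "K = the_enat (lambda_G n E) + beta n E"
  define \<xi> :: "nat \<Rightarrow> int" where "\<xi> i = (if i < n then I.val i else 0)" for i
  have conv: "(I.F ^^ K) x = \<xi>" if x: "x \<in> I.X" for x
  proof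
    fix i
    show "(I.F ^^ K) x i = \<xi> i"
    proof (cases "i < n")
      case True
      have "I.rb K i" using I.timing[OF True] by (simp add: K_def)
      then show ?thesis using I.determ x True by (simp add: \<xi>_def)
    next
      case False
      have "(I.F ^^ K) x \<in> I.X" using I.funpow_in x .
      then show ?thesis using False by (simp add: state_space_def \<xi>_def)
    qed
  qed
  have x0: "(\<lambda>_. 0) \<in> I.X" by (simp add: state_space_def I.hi_nonneg)
  have xiX: "\<xi> \<in> I.X" using conv[OF x0] I.funpow_in[OF x0, of K] by simp
  have db: "degree_bounded n I.lo0 I.hi I.F"
    unfolding degree_bounded_def Let_def I.ig_eq
  proof (intro allI impI)
    fix i assume i: "i < n"
    show "if out_degree E i = 0 \<and> 0 < in_degree E i then I.hi i - 0 + 1 = 2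
          else I.hi i - 0 + 1 \<le> int (out_degree E i) + 1"
      using i by (auto simp: I.hi_def I.tern_def)
  qed
  have src: "\<xi> i = 0" if i: "i < n" "in_degree E i = 0" for i
  proof -
    have "I.src i" using i I.in0_iff by (simp add: I.src_def)
    moreover have "I.rb K i" using I.timing[OF i(1)] by (simp add: K_def)
    ultimately have "\<not> I.b i" using I.b_src by blast
    then show ?thesis using i by (simp add: \<xi>_def I.val_def)
  qed
  show ?thesis
    apply (rule exI[of _ I.lo0], rule exI[of _ I.hi], rule exI[of _ I.F], rule exI[of _ \<xi>])
    using I.isFDS I.ig_eq db xiX conv src by (simp add: K_def)
qed



end
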